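(* Let $f:\mathbb{R}\to\mathbb{R}\cup\{\pm\infty\}$ be a proper concave function such that $f(\delta)\le 0$ and $\partial f(\delta)\cap\mathbb{R}_{<0}\neq\emptyset$ for some $\delta\in\operatorname{dom}(f)$, and such that $f$ has a root or attains its maximum. Let $\delta^*:=\max\big(\{\delta: f(\delta)=0\}\cup\operatorname{argmax} f\big)$. Run the look-ahead Newton–Dinkelbach method (described in the context) on $f$ from a valid initial pair $(\delta^{(1)},g^{(1)})$. Then for every iteration $i>2$ (i.e. whenever $\delta^{(i)}$ is defined with $i\ge 3$), \[ D_f(\delta^*,\delta^{(i)}) < \tfrac12\, D_f(\delta^*,\delta^{(i-2)}). \]
   Context: For a proper concave $f$, $\operatorname{dom}(f):=\{x:-\infty<f(x)<\infty\}$ and $\partial f(x_0):=\{g: f(x)\le f(x_0)+g(x-x_0)\ \forall x\in\mathbb{R}\}$ (supergradients). Bregman divergence: for $\delta,\delta'\in\operatorname{dom}(f)$ with $\partial f(\delta)\ne\emptyset$, $D_f(\delta',\delta):=f(\delta)+\sup_{g\in\partial f(\delta)} g(\delta'-\delta)-f(\delta')$ if $\delta\ne\delta'$, and $D_f(\delta,\delta):=0$. Look-ahead Newton–Dinkelbach method (Algorithm 1): it has an oracle that, given $\delta$, returns $f(\delta)$ and, if $f(\delta)>-\infty$, some (arbitrary) $g\in\partial f(\delta)$. Input: $\delta^{(1)}\in\operatorname{dom}(f)$ and $g^{(1)}\in\partial f(\delta^{(1)})$ with $f(\delta^{(1)})\le 0$ and $g^{(1)}<0$. For $i=1,2,\dots$: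 if $f(\delta^{(i)})=0$, return $\delta^{(i)}$. Otherwise set $\delta:=\delta^{(i)}-f(\delta^{(i)})/g^{(i)}$ and query $g\in\partial f(\delta)$; if $f(\delta)=-\infty$, or $f(\delta)<0$ and $g\ge 0$, return NO ROOT. Then set $\delta':=2\delta-\delta^{(i)}$ and query $g'\in\partial f(\delta')$; if $-\infty<f(\delta')<0$ and $g'<0$, replace $(\delta,g)$ by $(\delta',g')$. Set $\delta^{(i+1)}:=\delta$, $g^{(i+1)}:=g$. "Iteration $i$" is the iteration starting with the current pair $(\delta^{(i)},g^{(i)})$. *)

theory Defs
  imports "HOL-Analysis.Analysis" "HOL-Library.Extended_Real"
begin

definition proper_concave :: "(real \<Rightarrow> ereal) \<Rightarrow> bool" where
  "proper_concave f \<longleftrightarrow>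
     convex {(x, t::real). ereal t \<le> f x} \<and> (\<forall>x. f x \<noteq> \<infinity>) \<and> (\<exists>x. f x \<noteq> -\<infinity>)"

definition fdom :: "(real \<Rightarrow> ereal) \<Rightarrow> real set" where
  "fdom f = {x. -\<infinity> < f x \<and> f x < \<infinity>}"

definition sgrad :: "(real \<Rightarrow> ereal) \<Rightarrow> real \<Rightarrow> real set" where
  "sgrad f x0 = {g. \<forall>x. f x \<le> f x0 + ereal (g * (x - x0))}"

definition bregman :: "(real \<Rightarrow> ereal) \<Rightarrow> real \<Rightarrow> real \<Rightarrow> ereal" where
  "bregman f d' d =
     (if d' = d then 0
      else f d + (SUP g\<in>sgrad f d. ereal (g * (d' - d))) - f d')"

definition argmax_set :: "(real \<Rightarrow> ereal) \<Rightarrow> real set" where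
  "argmax_set f = {x. \<forall>y. f y \<le> f x}"

definition delta_star :: "(real \<Rightarrow> ereal) \<Rightarrow> real" where
  "delta_star f = (GREATEST x. x \<in> {d. f d = 0} \<union> argmax_set f)"

text \<open>One (non-terminating) iteration of the look-ahead Newton-Dinkelbach method,
  going from (d, g) = (delta^(i), g^(i)) to (d1, g1) = (delta^(i+1), g^(i+1)),
  where the oracle may return any supergradient.\<close>
definition la_step :: "(real \<Rightarrow> ereal) \<Rightarrow> real \<Rightarrow> real \<Rightarrow> real \<Rightarrow> real \<Rightarrow> bool" where
  "la_step f d g d1 g1 \<longleftrightarrow> f d \<noteq> 0 \<and>
     (let dl = d - real_of_ereal (f d) / g; dl' = 2 * dl - d in
       (\<exists>ga \<in> sgrad f dl. f dl \<noteq> -\<infinity> \<and> \<not> (f dl < 0 \<and> ga \<ge> 0) \<and>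
          ( (-\<infinity> < f dl' \<and> f dl' < 0 \<and> g1 \<in> sgrad f dl' \<and> g1 < 0 \<and> d1 = dl')
          \<or> ( d1 = dl \<and> g1 = ga \<and>
              (\<not> (-\<infinity> < f dl' \<and> f dl' < 0) \<or> sgrad f dl' = {} \<or>
               (\<exists>gb \<in> sgrad f dl'. gb \<ge> 0))))))"

definition la_run :: "(real \<Rightarrow> ereal) \<Rightarrow> (nat \<Rightarrow> real) \<Rightarrow> (nat \<Rightarrow> real) \<Rightarrow> nat \<Rightarrow> bool" where
  "la_run f ds gs N \<longleftrightarrow> 1 \<le> N \<and>
     ds 1 \<in> fdom f \<and> gs 1 \<in> sgrad f (ds 1) \<and> f (ds 1) \<le> 0 \<and> gs 1 < 0 \<and>
     (\<forall>i. 1 \<le> i \<and> i < N \<longrightarrow> la_step f (ds i) (gs i) (ds (Suc i)) (gs (Suc i)))"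

end

theory Submission
  imports Defs
begin


lemma conc:
  assumes pc: "proper_concave f" and fx: "f x = ereal a" and fz: "f z = ereal b"
    and u: "0 \<le> u" "u \<le> 1"
  shows "ereal (u*a + (1-u)*b) \<le> f (u*x + (1-u)*z)"
proof -
  have cv: "convex {(x, t::real). ereal t \<le> f x}" using pc unfolding proper_concave_def by blast
  have "u *\<^sub>R (x,a) + (1-u) *\<^sub>R (z,b) \<in> {(x, t::real). ereal t \<le> f x}"
    using cv u fx fz unfolding convex_def by auto
  then show ?thesis by (simp add: scaleR_prod_def)
qed

lemma conc3:
  assumes pc: "proper_concave f" and fx: "f x = ereal a" and fz: "f z = ereal b"
    and h1: "x \<le> y" and h2: "y \<le> z" and h3: "x < z"
  shows "\<exists>v. f y = ereal v \<and> (z - y) * a + (y - x) * b \<le> (z - x) * v"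
proof -
  define u where "u = (z-y)/(z-x)"
  have u: "0 \<le> u" "u \<le> 1" using h1 h2 h3 by (auto simp: u_def divide_simps)
  have uz: "u*(z-x) = z - y" using h3 by (simp add: u_def)
  have y: "u*x + (1-u)*z = y"
  proof -
    have "u*x + (1-u)*z = z - u*(z-x)" by (simp add: algebra_simps)
    then show ?thesis using uz by simp
  qed
  have le: "ereal (u*a + (1-u)*b) \<le> f y" using conc[OF pc fx fz u] y by simp
  have "f y \<noteq> \<infinity>" using pc unfolding proper_concave_def by blast
  with le obtain v where v: "f y = ereal v" by (cases "f y") auto
  have "u*a + (1-u)*b \<le> v" using le v by simp
  then have "(z-x)*(u*a + (1-u)*b) \<le> (z-x) * v" using h3 by (intro mult_left_mono) auto
  moreover have "(z-x)*(u*a + (1-u)*b) = (z - y) * a + (y - x) * b"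
  proof -
    have "(z-x)*(u*a + (1-u)*b) = (u*(z-x))*a + ((z-x) - u*(z-x))*b" by (simp add: algebra_simps)
    then show ?thesis using uz by simp
  qed
  ultimately show ?thesis using v by auto
qed

lemma frac_le: fixes a b c d :: real shows "0 < b \<Longrightarrow> 0 < d \<Longrightarrow> a * d \<le> c * b \<Longrightarrow> a / b \<le> c / d"
  by (simp add: divide_simps mult.commute)

lemma fin_between:
  assumes pc: "proper_concave f" and fx: "f x = ereal a" and fz: "f z = ereal b"
    and h1: "x \<le> y" and h2: "y \<le> z"
  shows "\<exists>v. f y = ereal v"
proof (cases "x < z")
  case True then show ?thesis using conc3[OF pc fx fz h1 h2] by blast
next
  case False then have "y = x" using h1 h2 by auto
  then show ?thesis using fx by auto
qed

lemma slope3: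
  assumes pc: "proper_concave f" and fx: "f y1 = ereal a1" and fz: "f y3 = ereal a3"
    and h1: "y1 < y2" and h2: "y2 < y3"
  shows "\<exists>a2. f y2 = ereal a2 \<and> (a3 - a1) / (y3 - y1) \<le> (a2 - a1) / (y2 - y1)
     \<and> (a3 - a2) / (y3 - y2) \<le> (a3 - a1) / (y3 - y1)
     \<and> (a3 - a2) / (y3 - y2) \<le> (a2 - a1) / (y2 - y1)"
proof -
  obtain a2 where a2: "f y2 = ereal a2" and ineq: "(y3 - y2) * a1 + (y2 - y1) * a3 \<le> (y3 - y1) * a2"
  proof -
    have "\<exists>v. f y2 = ereal v \<and> (y3 - y2) * a1 + (y2 - y1) * a3 \<le> (y3 - y1) * v"
      using conc3[OF pc fx fz, of y2] h1 h2 by simp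
    then show ?thesis using that by blast
  qed
  have e1: "(a2 - a1) * (y3 - y1) - (a3 - a1) * (y2 - y1) = (y3 - y1) * a2 - ((y3 - y2) * a1 + (y2 - y1) * a3)"
    by (simp add: algebra_simps)
  have e2: "(a3 - a1) * (y3 - y2) - (a3 - a2) * (y3 - y1) = (y3 - y1) * a2 - ((y3 - y2) * a1 + (y2 - y1) * a3)"
    by (simp add: algebra_simps)
  have e3: "(a2 - a1) * (y3 - y2) - (a3 - a2) * (y2 - y1) = (y3 - y1) * a2 - ((y3 - y2) * a1 + (y2 - y1) * a3)"
    by (simp add: algebra_simps)
  have "(a3 - a1) / (y3 - y1) \<le> (a2 - a1) / (y2 - y1)"
    using h1 h2 e1 ineq by (intro frac_le) auto 
  moreover have "(a3 - a2) / (y3 - y2) \<le> (a3 - a1) / (y3 - y1)"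
    using h1 h2 e2 ineq by (intro frac_le) auto
  moreover have "(a3 - a2) / (y3 - y2) \<le> (a2 - a1) / (y2 - y1)"
    using h1 h2 e3 ineq by (intro frac_le) auto
  ultimately show ?thesis using a2 by blast
qed

lemma sgrad_le: "g \<in> sgrad f x \<Longrightarrow> f y \<le> f x + ereal (g * (y - x))"
  unfolding sgrad_def by blast

lemma sgrad_mono:
  assumes fx: "f x = ereal a" and fy: "f y = ereal b" and yx: "y < x"
    and gy: "gy \<in> sgrad f y" and gx: "gx \<in> sgrad f x"
  shows "gx \<le> gy"
proof -
  have "f x \<le> f y + ereal (gy * (x - y))" using gy by (rule sgrad_le)
  then have 1: "a \<le> b + gy * (x - y)" using fx fy by simp
  have "f y \<le> f x + ereal (gx * (y - x))" using gx by (rule sgrad_le)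
  then have 2: "b \<le> a + gx * (y - x)" using fx fy by simp
  have "0 \<le> (gy - gx) * (x - y)" using 1 2 by (simp add: algebra_simps)
  then show ?thesis using yx by (simp add: zero_le_mult_iff)
qed

lemma cont:
  assumes pc: "proper_concave f" and fp: "f p = ereal a" and fq: "f q = ereal b"
  shows "continuous_on {p<..<q} (\<lambda>x. real_of_ereal (f x))"
proof -
  have "convex_on {p<..<q} (\<lambda>x. - real_of_ereal (f x))"
  proof (rule convex_onI)
    fix t x y :: real assume t: "0 < t" "t < 1" and x: "x \<in> {p<..<q}" and y: "y \<in> {p<..<q}"
    obtain wx where wx: "f x = ereal wx" using fin_between[OF pc fp fq, of x] x by auto
    obtain wy where wy: "f y = ereal wy" using fin_between[OF pc fp fq, of y] y by auto
    have cc: "ereal ((1-t)*wx + (1-(1-t))*wy) \<le> f ((1-t)*x + (1-(1-t))*y)"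
      using conc[OF pc wx wy, of "1-t"] t by auto
    have "\<exists>w. f ((1-t)*x + t*y) = ereal w"
    proof -
      have e1: "(1-t)*x + t*y - p = (1-t)*(x-p) + t*(y-p)" by (simp add: algebra_simps)
      have e2: "0 < (1-t)*(x-p) + t*(y-p)" using x y t by (intro add_pos_pos mult_pos_pos) auto
      have e3: "q - ((1-t)*x + t*y) = (1-t)*(q-x) + t*(q-y)" by (simp add: algebra_simps)
      have e4: "0 < (1-t)*(q-x) + t*(q-y)" using x y t by (intro add_pos_pos mult_pos_pos) auto
      have "p \<le> (1-t)*x + t*y" using e1 e2 by linarith
      moreover have "(1-t)*x + t*y \<le> q" using e3 e4 by linarith
      ultimately show ?thesis using fin_between[OF pc fp fq, of "(1-t)*x + t*y"] by blast
    qed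
    then obtain w where w: "f ((1-t)*x + t*y) = ereal w" by blast
    have "(1-t)*wx + t*wy \<le> w" using w cc by simp
    then show "- real_of_ereal (f ((1 - t) *\<^sub>R x + t *\<^sub>R y)) \<le> (1 - t) * - real_of_ereal (f x) + t * - real_of_ereal (f y)"
      using wx wy w by simp
  qed auto
  then have "continuous_on {p<..<q} (\<lambda>x. - real_of_ereal (f x))"
    by (intro convex_on_continuous) auto
  then have "continuous_on {p<..<q} (\<lambda>x. - (- real_of_ereal (f x)))"
    by (rule continuous_on_minus)
  then show ?thesis by simp
qed

lemma fin_between':
  assumes pc: "proper_concave f" and fx: "f x = ereal a" and fz: "f z = ereal b"
    and h1: "x \<le> y" and h2: "y \<le> z"
  shows "f y = ereal (real_of_ereal (f y))"
  using fin_between[OF pc fx fz h1 h2] by auto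

lemma not_inf: "proper_concave f \<Longrightarrow> f x \<noteq> \<infinity>"
  unfolding proper_concave_def by blast

lemma sgrad_exists:
  assumes pc: "proper_concave f" and fp: "f p = ereal a" and fq: "f q = ereal b"
    and pz: "p < z" and zq: "z < q"
  shows "sgrad f z \<noteq> {}"
proof -
  define h where "h = (\<lambda>x. real_of_ereal (f x))"
  have fin: "f y = ereal (h y)" if "p \<le> y" "y \<le> q" for y
    using fin_between'[OF pc fp fq that] by (simp add: h_def)
  define S where "S = (\<lambda>y. (h z - h y)/(z - y)) ` {p..<z}"
  have Sne: "S \<noteq> {}" using pz by (auto simp: S_def)
  have lb: "(h q - h z)/(q - z) \<le> s" if "s \<in> S" for s
  proof -
    from that obtain y where y: "p \<le> y" "y < z" and s: "s = (h z - h y)/(z - y)" by (auto simp: S_def)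
    obtain a2 where "f z = ereal a2" "(h q - a2) / (q - z) \<le> (a2 - h y) / (z - y)"
      using slope3[OF pc fin[of y] fin[of q], of z] y zq by auto
    moreover have "f z = ereal (h z)" using fin pz zq by auto
    ultimately show ?thesis using s by auto
  qed
  have bdd: "bdd_below S" using lb by (auto simp: bdd_below_def)
  define g where "g = Inf S"
  have "g \<in> sgrad f z"
    unfolding sgrad_def
  proof (intro CollectI allI)
    fix x
    have fz: "f z = ereal (h z)" using fin pz zq by auto
    show "f x \<le> f z + ereal (g * (x - z))"
    proof (cases "f x")
      case (real v)
      consider "x < z" | "x = z" | "x > z" by linarith
      then show ?thesis
      proof cases
        case 1
        have "g \<le> (h z - v)/(z - x)"
        proof (cases "p \<le> x")
          case True
          then have "(h z - v)/(z - x) \<in> S" using 1 real fin[of x] zq pz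
            unfolding S_def by (intro image_eqI[of _ _ x]) auto
          then show ?thesis unfolding g_def using bdd by (rule cInf_lower)
        next
          case False
          obtain a2 where a2: "f p = ereal a2" "(h z - a2) / (z - p) \<le> (h z - v) / (z - x)"
            using slope3[OF pc real fz, of p] False pz by auto
          have "a2 = h p" using a2(1) fin[of p] pz zq by auto
          moreover have "(h z - h p)/(z - p) \<in> S" using pz unfolding S_def by auto
          ultimately show ?thesis using a2(2) cInf_lower[OF _ bdd] unfolding g_def by fastforce
        qed
        then have "g * (z - x) \<le> h z - v" using 1 by (simp add: pos_le_divide_eq)
        then have "v \<le> h z + g * (x - z)" by (simp add: algebra_simps)
        then show ?thesis using real fz by simp
      next
        case 2 then show ?thesis by simp
      next
        case 3
        have "(v - h z)/(x - z) \<le> g" unfolding g_def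
        proof (rule cInf_greatest[OF Sne])
          fix s assume "s \<in> S"
          then obtain y where y: "p \<le> y" "y < z" and s: "s = (h z - h y)/(z - y)" by (auto simp: S_def)
          obtain a2 where "f z = ereal a2" "(v - a2) / (x - z) \<le> (a2 - h y) / (z - y)"
            using slope3[OF pc fin[of y] real, of z] y zq 3 by auto
          then show "(v - h z)/(x - z) \<le> s" using s fz by auto
        qed
        then have "v - h z \<le> g * (x - z)" using 3 by (simp add: pos_divide_le_eq)
        then have "v \<le> h z + g * (x - z)" by (simp add: algebra_simps)
        then show ?thesis using real fz by simp
      qed
    next
      case PInf then show ?thesis using not_inf[OF pc] by auto
    next
      case MInf then show ?thesis by simp
    qed
  qed
  then show ?thesis by auto
qed


lemma ivt_root:
  assumes pc: "proper_concave f" and d0: "f d0 = ereal b0" "b0 \<le> 0" "g0 \<in> sgrad f d0" "g0 < 0"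
    and fp: "f p = ereal a" "0 < a" "p < d0"
  shows "\<exists>r>p. f r = 0"
proof (cases "b0 = 0")
  case True then show ?thesis using fp d0 by (auto simp: zero_ereal_def)
next
  case False
  then have b0: "b0 < 0" using d0 by auto
  define t where "t = min ((d0 - p)/2) (b0/(2*g0))"
  have "0 < b0/(2*g0)" using b0 d0 by (simp add: zero_less_divide_iff)
  moreover have "0 < (d0 - p)/2" using fp by simp
  ultimately have t1: "0 < t" unfolding t_def by simp
  have t2: "t \<le> (d0 - p)/2" unfolding t_def by (rule min.cobounded1)
  have t3: "t \<le> b0/(2*g0)" unfolding t_def by (rule min.cobounded2)
  note t = t1 t2 t3
  have gt: "b0/2 \<le> g0 * t"
  proof -
    have "g0 * (b0/(2*g0)) \<le> g0 * t" using t(3) d0(4) by (intro mult_left_mono_neg) auto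
    moreover have "g0 * (b0/(2*g0)) = b0/2" using d0(4) by simp
    ultimately show ?thesis by simp
  qed
  define y where "y = d0 - t"
  have py: "p < y" "y < d0" using t fp unfolding y_def by auto
  obtain cy where cy: "f y = ereal cy" using fin_between[OF pc fp(1) d0(1), of y] py by auto
  have "f y \<le> f d0 + ereal (g0 * (y - d0))" using sgrad_le[OF d0(3)] .
  then have "cy \<le> b0 + g0 * (y - d0)" using cy d0 by simp
  then have cy0: "cy < 0" using gt b0 unfolding y_def by (simp add: algebra_simps)
  define s where "s = a/(2*(a - cy))"
  have s: "0 < s" "s \<le> 1" using fp cy0 by (auto simp: s_def divide_simps)
  have "a - cy \<noteq> 0" using fp cy0 by simp
  then have sa: "s * (a - cy) = a/2" unfolding s_def by (simp add: field_simps)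
  define q where "q = (1-s)*p + (1-(1-s))*y"
  have fq: "ereal ((1-s)*a + (1-(1-s))*cy) \<le> f q"
    unfolding q_def using conc[OF pc fp(1) cy, of "1-s"] s by auto
  have "(1-s)*a + (1-(1-s))*cy = a - s * (a - cy)" by (simp add: algebra_simps)
  then have "(1-s)*a + (1-(1-s))*cy = a/2" using sa by simp
  then have fq2: "ereal (a/2) \<le> f q" using fq by metis
  have qeq: "q = p + s * (y - p)" unfolding q_def by (simp add: algebra_simps)
  have "0 < s * (y - p)" using s py by simp
  then have pq: "p < q" using qeq by simp
  have "s * (y - p) \<le> 1 * (y - p)" using s py by (intro mult_right_mono) auto
  then have qy: "q \<le> y" using qeq by simp
  define h where "h = (\<lambda>x. real_of_ereal (f x))"
  have fqr: "f q = ereal (h q)" using fin_between'[OF pc fp(1) d0(1), of q] pq qy py by (simp add: h_def)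
  have hq: "0 \<le> h q" using fq2 fqr fp by simp
  have hy: "h y \<le> 0" using cy cy0 by (simp add: h_def)
  have "continuous_on {p<..<d0} h" unfolding h_def by (rule cont[OF pc fp(1) d0(1)])
  then have "continuous_on {q..y} h" by (rule continuous_on_subset) (use pq py in auto)
  then obtain r where r: "q \<le> r" "r \<le> y" "h r = 0" using IVT2'[of h y 0 q] hy hq qy by auto
  have "f r = ereal (h r)" using fin_between'[OF pc fp(1) d0(1), of r] pq r py by (simp add: h_def)
  then show ?thesis using r pq by (intro exI[of _ r]) (auto simp: zero_ereal_def)
qed

lemma sup_closed:
  assumes pc: "proper_concave f" and d0: "f d0 = ereal b0" "g0 \<in> sgrad f d0" "g0 < 0" "b0 \<le> v"
    and ne: "f p = ereal v" and ub: "\<And>y. f y = ereal v \<Longrightarrow> y \<le> d0"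
  shows "\<exists>m. f m = ereal v \<and> (\<forall>y. f y = ereal v \<longrightarrow> y \<le> m)"
proof -
  define P where "P = {y. f y = ereal v}"
  define s where "s = Sup P"
  have pP: "p \<in> P" using ne by (simp add: P_def)
  have bdd: "bdd_above P" using ub by (auto simp: bdd_above_def P_def)
  have upper: "y \<le> s" if "y \<in> P" for y using cSup_upper[OF that bdd] by (simp add: s_def)
  have ps: "p \<le> s" using upper pP .
  have sd: "s \<le> d0" unfolding s_def using pP ub by (intro cSup_least) (auto simp: P_def)
  have close: "\<exists>y. f y = ereal v \<and> s - e < y \<and> y \<le> s" if e: "0 < e" for e
  proof -
    have "s - e < Sup P" using e by (simp add: s_def)
    then obtain y where "y \<in> P" "s - e < y" using less_cSup_iff[of P] pP bdd by blast
    then show ?thesis using upper by (auto simp: P_def)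
  qed
  have "f s = ereal v"
  proof (rule ccontr)
    assume nev: "f s \<noteq> ereal v"
    have ps': "p < s" using ps nev ne by (cases "p = s") auto
    show False
    proof (cases "s = d0")
      case True
      then have bv: "b0 < v" using nev d0 by auto
      define e where "e = (v - b0)/(2*(-g0))"
      have e: "0 < e" using bv d0 unfolding e_def by (intro divide_pos_pos) auto
      obtain y where y: "f y = ereal v" "s - e < y" "y \<le> s" using close[OF e] by auto
      have "f y \<le> f d0 + ereal (g0 * (y - d0))" using sgrad_le[OF d0(2)] .
      then have 1: "v \<le> b0 + g0 * (y - d0)" using y d0 by simp
      have "(-g0) * (d0 - y) < (-g0) * e" using y True d0 by (intro mult_strict_left_mono) auto
      moreover have "(-g0) * e = (v - b0)/2" using d0 by (simp add: e_def)
      ultimately show False using 1 bv by (simp add: algebra_simps)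
    next
      case False
      then have sd': "s < d0" using sd by simp
      define h where "h = (\<lambda>x. real_of_ereal (f x))"
      have fs: "f s = ereal (h s)" using fin_between'[OF pc ne d0(1), of s] ps sd by (simp add: h_def)
      have "continuous_on {p<..<d0} h" unfolding h_def by (rule cont[OF pc ne d0(1)])
      then have "isCont h s" using continuous_on_eq_continuous_at[of "{p<..<d0}" h] ps' sd' by auto
      moreover have "0 < \<bar>h s - v\<bar>" using nev fs by auto
      ultimately obtain dd where dd: "0 < dd" "\<And>x'. dist x' s < dd \<Longrightarrow> dist (h x') (h s) < \<bar>h s - v\<bar>"
        unfolding continuous_at_eps_delta by blast
      obtain y where y: "f y = ereal v" "s - dd < y" "y \<le> s" using close[OF dd(1)] by auto
      have "dist y s < dd" using y by (simp add: dist_real_def)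
      then have "dist (h y) (h s) < \<bar>h s - v\<bar>" by (rule dd(2))
      then show False using y by (simp add: h_def dist_real_def)
    qed
  qed
  then show ?thesis using upper by (auto simp: P_def)
qed



lemma dstar:
  assumes pc: "proper_concave f"
    and a2: "\<exists>d \<in> fdom f. f d \<le> 0 \<and> (\<exists>g \<in> sgrad f d. g < 0)"
    and a3: "(\<exists>x. f x = 0) \<or> argmax_set f \<noteq> {}"
  shows "\<exists>c. f (delta_star f) = ereal c \<and> c \<le> 0 \<and> (\<forall>z>delta_star f. f z < ereal c)
           \<and> (\<forall>y. f y \<le> 0 \<longrightarrow> f y \<le> ereal c)"
proof -
  obtain d0 g0 where d0: "d0 \<in> fdom f" "f d0 \<le> 0" "g0 \<in> sgrad f d0" "g0 < 0" using a2 by blast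
  obtain b0 where fb0: "f d0 = ereal b0" using d0(1) unfolding fdom_def by (cases "f d0") auto
  have b0: "b0 \<le> 0" using d0(2) fb0 by (simp add: zero_ereal_def)
  have right: "f x < ereal b0" if "d0 < x" for x
  proof -
    have "f x \<le> f d0 + ereal (g0 * (x - d0))" by (rule sgrad_le[OF d0(3)])
    moreover have "g0 * (x - d0) < 0" using that d0(4) by (simp add: mult_neg_pos)
    ultimately show ?thesis using fb0 by (cases "f x") auto
  qed
  define S where "S = {d. f d = 0} \<union> argmax_set f"
  have ub: "x \<le> d0" if "x \<in> S" for x
  proof (rule ccontr)
    assume "\<not> x \<le> d0"
    then have lt: "f x < ereal b0" using right by simp
    show False
    proof (cases "f x = 0")
      case True then show False using lt b0 by (simp add: zero_ereal_def)
    next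
      case False then have "x \<in> argmax_set f" using that by (auto simp: S_def)
      then have "f d0 \<le> f x" by (auto simp: argmax_set_def)
      then show False using lt fb0 by simp
    qed
  qed
  have exm: "\<exists>m\<in>S. \<forall>x\<in>S. x \<le> m"
  proof -
    have R: "\<exists>m. f m = 0 \<and> (\<forall>y. f y = 0 \<longrightarrow> y \<le> m)" if "f r = 0" for r
      using sup_closed[OF pc fb0 d0(3) d0(4) b0, of r] that ub by (auto simp: S_def zero_ereal_def)
    have A: "\<exists>m\<in>argmax_set f. \<forall>y\<in>argmax_set f. y \<le> m" if "a \<in> argmax_set f" for a
    proof -
      have fa: "f d0 \<le> f a" using that by (auto simp: argmax_set_def)
      obtain M where M: "f a = ereal M" using fa fb0 not_inf[OF pc, of a] by (cases "f a") auto
      have eq: "argmax_set f = {y. f y = ereal M}"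
      proof (intro set_eqI iffI)
        fix y assume "y \<in> argmax_set f"
        then have "f a \<le> f y" "f y \<le> f a" using that by (auto simp: argmax_set_def)
        then show "y \<in> {y. f y = ereal M}" using M by auto
      next
        fix y assume "y \<in> {y. f y = ereal M}"
        then show "y \<in> argmax_set f" using that M by (auto simp: argmax_set_def)
      qed
      have "b0 \<le> M" using fa fb0 M by simp
      then obtain m where "f m = ereal M" "\<forall>y. f y = ereal M \<longrightarrow> y \<le> m"
        using sup_closed[OF pc fb0 d0(3) d0(4), of M a] M ub eq by (auto simp: S_def)
      then show ?thesis using eq by auto
    qed
    show ?thesis
    proof (cases "\<exists>r. f r = 0")
      case True
      then obtain mR where mR: "f mR = 0" "\<forall>y. f y = 0 \<longrightarrow> y \<le> mR" using R by blast
      show ?thesis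
      proof (cases "argmax_set f = {}")
        case True then show ?thesis using mR by (intro bexI[of _ mR]) (auto simp: S_def)
      next
        case False
        then obtain mA where mA: "mA \<in> argmax_set f" "\<forall>y\<in>argmax_set f. y \<le> mA" using A by blast
        show ?thesis using mR mA by (intro bexI[of _ "max mR mA"]) (auto simp: S_def max_def)
      qed
    next
      case False
      then have "argmax_set f \<noteq> {}" using a3 by blast
      then obtain mA where mA: "mA \<in> argmax_set f" "\<forall>y\<in>argmax_set f. y \<le> mA" using A by blast
      show ?thesis using mA False by (intro bexI[of _ mA]) (auto simp: S_def)
    qed
  qed
  then obtain m where m: "m \<in> S" "\<forall>x\<in>S. x \<le> m" by blast
  have dm: "delta_star f = m" unfolding delta_star_def
    using m by (intro Greatest_equality) (auto simp: S_def)
  have md0: "m \<le> d0" using ub m by blast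
  show ?thesis
  proof (cases "f m = 0")
    case True
    have "f z < 0" if "m < z" for z
    proof -
      have ne: "f z \<noteq> 0"
      proof
        assume "f z = 0"
        then have "z \<in> S" by (simp add: S_def)
        then show False using m that by force
      qed
      have "\<not> f z > 0"
      proof
        assume pos: "f z > 0"
        then obtain az where az: "f z = ereal az" "0 < az" using not_inf[OF pc, of z] by (cases "f z") auto
        have "z < d0"
        proof (rule ccontr)
          assume "\<not> z < d0"
          then consider "z = d0" | "d0 < z" by linarith
          then show False using right[of z] fb0 b0 az by cases auto
        qed
        then obtain r where r: "r > z" "f r = 0" using ivt_root[OF pc fb0 b0 d0(3) d0(4) az(1) az(2)] by blast
        then have "r \<in> S" by (simp add: S_def)
        then show False using m(2) r that by force
      qed
      then show ?thesis using ne by auto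
    qed
    then show ?thesis using True dm by (intro exI[of _ 0]) (auto simp: zero_ereal_def)
  next
    case False
    then have mA: "m \<in> argmax_set f" using m by (auto simp: S_def)
    then have fa: "f d0 \<le> f m" by (auto simp: argmax_set_def)
    obtain c where c: "f m = ereal c" using fa fb0 not_inf[OF pc, of m] by (cases "f m") auto
    have "\<not> c > 0"
    proof
      assume cpos: "c > 0"
      have "m \<noteq> d0" using c fb0 b0 cpos by auto
      then have "m < d0" using md0 by simp
      then obtain r where r: "r > m" "f r = 0" using ivt_root[OF pc fb0 b0 d0(3) d0(4) c cpos] by blast
      then have "r \<in> S" by (simp add: S_def)
      then show False using m(2) r by force
    qed
    moreover have "c \<noteq> 0" using False c by (auto simp: zero_ereal_def)
    ultimately have c0: "c < 0" by simp
    have "f z < ereal c" if "m < z" for z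
    proof -
      have "f z \<le> f m" using mA by (auto simp: argmax_set_def)
      moreover have "f z \<noteq> f m"
      proof
        assume "f z = f m"
        then have "z \<in> argmax_set f" using mA by (auto simp: argmax_set_def)
        then have "z \<in> S" by (simp add: S_def)
        then show False using m(2) that by force
      qed
      ultimately show ?thesis using c by auto
    qed
    moreover have "\<forall>y. f y \<le> ereal c" using mA c by (auto simp: argmax_set_def)
    ultimately show ?thesis using dm c c0 by (intro exI[of _ c]) auto
  qed
qed



lemma breg_lower:
  assumes ft: "f t = ereal c" and fx: "f x = ereal a" and g: "g \<in> sgrad f x"
  shows "ereal (a + g * (t - x) - c) \<le> bregman f t x"
proof (cases "t = x")
  case True then show ?thesis using ft fx by (simp add: bregman_def)
next
  case False
  have le: "ereal (g * (t - x)) \<le> (SUP g\<in>sgrad f x. ereal (g * (t - x)))"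
    using g by (rule SUP_upper)
  show ?thesis
  proof (cases "(SUP g\<in>sgrad f x. ereal (g * (t - x)))")
    case (real r)
    then show ?thesis using le False ft fx by (simp add: bregman_def)
  next
    case PInf
    then show ?thesis using False ft fx by (simp add: bregman_def)
  next
    case MInf
    then show ?thesis using le by simp
  qed
qed

lemma breg_upper:
  assumes ft: "f t = ereal c" and fy: "f y = ereal b" and ty: "t \<le> y"
    and B: "\<And>g. g \<in> sgrad f y \<Longrightarrow> g * (t - y) \<le> B" and B0: "0 \<le> B"
  shows "bregman f t y \<le> ereal (b + B - c)"
proof (cases "t = y")
  case True then show ?thesis using ft fy B0 by (simp add: bregman_def)
next
  case False
  have le: "(SUP g\<in>sgrad f y. ereal (g * (t - y))) \<le> ereal B"
    using B by (intro SUP_least) simp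
  show ?thesis
  proof (cases "(SUP g\<in>sgrad f y. ereal (g * (t - y)))")
    case (real r)
    then show ?thesis using le False ft fy by (simp add: bregman_def)
  next
    case PInf
    then show ?thesis using le by simp
  next
    case MInf
    then show ?thesis using False ft fy by (simp add: bregman_def)
  qed
qed

lemma step:
  assumes pc: "proper_concave f"
    and ft: "f t = ereal c" "c \<le> 0" "\<forall>z>t. f z < ereal c" "\<forall>y. f y \<le> 0 \<longrightarrow> f y \<le> ereal c"
    and x: "f x = ereal a" "a < 0" "t \<le> x" "g \<in> sgrad f x" "g < 0"
    and st: "la_step f x g x' g'"
  shows "\<exists>a'. f x' = ereal a' \<and> a' \<le> 0 \<and> g' \<in> sgrad f x' \<and> (a' < 0 \<longrightarrow> g' < 0) \<and> t \<le> x'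
     \<and> x' \<le> x - a/g \<and> t \<le> x - a/g \<and> x - a/g < x
     \<and> (x' = 2*(x - a/g) - x \<or> (x' = x - a/g \<and> 2*(x - a/g) - x \<le> t))"
proof -
  define n where "n = x - a/g"
  have stt: "\<exists>ga \<in> sgrad f n. f n \<noteq> -\<infinity> \<and> \<not> (f n < 0 \<and> ga \<ge> 0) \<and>
          ( (-\<infinity> < f (2*n - x) \<and> f (2*n - x) < 0 \<and> g' \<in> sgrad f (2*n - x) \<and> g' < 0 \<and> x' = 2*n - x)
          \<or> ( x' = n \<and> g' = ga \<and>
              (\<not> (-\<infinity> < f (2*n - x) \<and> f (2*n - x) < 0) \<or> sgrad f (2*n - x) = {} \<or>
               (\<exists>gb \<in> sgrad f (2*n - x). gb \<ge> 0))))"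
    using st x(1) unfolding la_step_def n_def Let_def by simp
  then obtain ga where ga: "ga \<in> sgrad f n" "f n \<noteq> -\<infinity>" "\<not> (f n < 0 \<and> ga \<ge> 0)"
    and br: "(-\<infinity> < f (2*n - x) \<and> f (2*n - x) < 0 \<and> g' \<in> sgrad f (2*n - x) \<and> g' < 0 \<and> x' = 2*n - x)
          \<or> ( x' = n \<and> g' = ga \<and>
              (\<not> (-\<infinity> < f (2*n - x) \<and> f (2*n - x) < 0) \<or> sgrad f (2*n - x) = {} \<or>
               (\<exists>gb \<in> sgrad f (2*n - x). gb \<ge> 0)))" by blast
  have tang: "f y \<le> ereal (a + g * (y - x))" for y
    using sgrad_le[OF x(4), of y] x(1) by simp
  have gn: "g * (n - x) = - a" using x(5) by (simp add: n_def)
  have fn0: "f n \<le> 0" using tang[of n] gn by (simp add: zero_ereal_def)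
  have nx: "n < x" using x(2) x(5) by (simp add: n_def divide_neg_neg)
  obtain w where w: "f n = ereal w" using ga(2) fn0 by (cases "f n") auto
  have "f n \<le> ereal c" using ft(4) fn0 by blast
  then have wc: "w \<le> c" using w by simp
  have tn: "t \<le> n"
  proof (rule ccontr)
    assume "\<not> t \<le> n"
    then have nt: "n < t" by simp
    have "c \<le> a + g * (t - x)" using tang[of t] ft(1) by simp
    moreover have "g * (t - x) < g * (n - x)" using nt x(5) by simp
    ultimately have c0: "c < 0" using gn by simp
    have "f t \<le> f n + ereal (ga * (t - n))" by (rule sgrad_le[OF ga(1)])
    then have "c \<le> w + ga * (t - n)" using ft(1) w by simp
    then have "0 \<le> ga * (t - n)" using wc by simp
    then have "0 \<le> ga" using nt by (simp add: zero_le_mult_iff)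
    moreover have "f n < 0" using w wc c0 by (simp add: zero_ereal_def)
    ultimately show False using ga(3) by simp
  qed
  from br show ?thesis
  proof
    assume b1: "-\<infinity> < f (2*n - x) \<and> f (2*n - x) < 0 \<and> g' \<in> sgrad f (2*n - x) \<and> g' < 0 \<and> x' = 2*n - x"
    then obtain a' where a': "f x' = ereal a'" by (cases "f x'") auto
    have a'0: "a' < 0" using b1 a' by (simp add: zero_ereal_def)
    have a'c: "a' \<le> c" using ft(4) b1 a' by (metis ereal_less_eq(3) less_imp_le)
    have "t \<le> x'"
    proof (rule ccontr)
      assume "\<not> t \<le> x'"
      then have xt: "x' < t" by simp
      have "f t \<le> f x' + ereal (g' * (t - x'))" using b1 by (intro sgrad_le) auto
      then have "c \<le> a' + g' * (t - x')" using ft(1) a' by simp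
      moreover have "g' * (t - x') < 0" using b1 xt by (simp add: mult_neg_pos)
      ultimately show False using a'c by simp
    qed
    then show ?thesis using a' a'0 b1 nx tn by (auto simp: n_def)
  next
    assume b2: "x' = n \<and> g' = ga \<and>
              (\<not> (-\<infinity> < f (2*n - x) \<and> f (2*n - x) < 0) \<or> sgrad f (2*n - x) = {} \<or>
               (\<exists>gb \<in> sgrad f (2*n - x). gb \<ge> 0))"
    have "2*n - x \<le> t"
    proof (rule ccontr)
      assume "\<not> 2*n - x \<le> t"
      then have tz: "t < 2*n - x" by simp
      have zx: "2*n - x < x" using nx by simp
      obtain wz where wz: "f (2*n - x) = ereal wz" using fin_between[OF pc ft(1) x(1), of "2*n - x"] tz zx by auto
      have wzc: "wz < c" using ft(3) tz wz by auto
      have 1: "-\<infinity> < f (2*n - x) \<and> f (2*n - x) < 0" using wz wzc ft(2) by (simp add: zero_ereal_def)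
      have 2: "sgrad f (2*n - x) \<noteq> {}" using sgrad_exists[OF pc ft(1) x(1) tz zx] .
      have 3: "gb < 0" if "gb \<in> sgrad f (2*n - x)" for gb
      proof -
        have "f t \<le> f (2*n - x) + ereal (gb * (t - (2*n - x)))" by (rule sgrad_le[OF that])
        then have "c \<le> wz + gb * (t - (2*n - x))" using ft(1) wz by simp
        then have "0 < gb * (t - (2*n - x))" using wzc by simp
        then show ?thesis using tz by (simp add: zero_less_mult_iff)
      qed
      show False using b2 1 2 3 by force
    qed
    moreover have "w < 0 \<longrightarrow> ga < 0" using ga(3) w by (auto simp: zero_ereal_def)
    moreover have "w \<le> 0" using wc ft(2) by simp
    ultimately show ?thesis using b2 w ga(1) tn nx by (auto simp: n_def)
  qed
qed



lemma run_inv: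
  assumes pc: "proper_concave f"
    and ft: "f t = ereal c" "c \<le> 0" "\<forall>z>t. f z < ereal c" "\<forall>y. f y \<le> 0 \<longrightarrow> f y \<le> ereal c"
    and run: "la_run f ds gs N"
    and k: "1 \<le> k"
  shows "k \<le> N \<longrightarrow> (\<exists>a. f (ds k) = ereal a \<and> a \<le> 0 \<and> gs k \<in> sgrad f (ds k) \<and> (a < 0 \<longrightarrow> gs k < 0) \<and> t \<le> ds k)"
  using k
proof (induction k rule: nat_induct_at_least)
  case base
  have r: "ds 1 \<in> fdom f" "gs 1 \<in> sgrad f (ds 1)" "f (ds 1) \<le> 0" "gs 1 < 0"
    using run unfolding la_run_def by auto
  obtain a where a: "f (ds 1) = ereal a" using r(1) unfolding fdom_def by (cases "f (ds 1)") auto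
  have a0: "a \<le> 0" using r(3) a by (simp add: zero_ereal_def)
  have ac: "a \<le> c" using ft(4) r(3) a by (metis ereal_less_eq(3))
  have "t \<le> ds 1"
  proof (rule ccontr)
    assume "\<not> t \<le> ds 1"
    then have lt: "ds 1 < t" by simp
    have "f t \<le> f (ds 1) + ereal (gs 1 * (t - ds 1))" by (rule sgrad_le[OF r(2)])
    then have "c \<le> a + gs 1 * (t - ds 1)" using ft(1) a by simp
    moreover have "gs 1 * (t - ds 1) < 0" using r(4) lt by (simp add: mult_neg_pos)
    ultimately show False using ac by simp
  qed
  then show ?case using a a0 r by auto
next
  case (Suc k)
  show ?case
  proof
    assume SN: "Suc k \<le> N"
    then obtain a where a: "f (ds k) = ereal a" "a \<le> 0" "gs k \<in> sgrad f (ds k)" "a < 0 \<longrightarrow> gs k < 0" "t \<le> ds k"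
      using Suc by auto
    have st: "la_step f (ds k) (gs k) (ds (Suc k)) (gs (Suc k))"
      using run Suc(1) SN unfolding la_run_def by auto
    then have "a \<noteq> 0" using a(1) unfolding la_step_def by (auto simp: zero_ereal_def)
    then have a0: "a < 0" using a(2) by simp
    show "\<exists>a. f (ds (Suc k)) = ereal a \<and> a \<le> 0 \<and> gs (Suc k) \<in> sgrad f (ds (Suc k)) \<and> (a < 0 \<longrightarrow> gs (Suc k) < 0) \<and> t \<le> ds (Suc k)"
      using step[OF pc ft a(1) a0 a(5) a(3) _ st] a(4) a0 by blast
  qed
qed

lemma aux1: fixes A B C a c :: real shows "A = B + C \<Longrightarrow> C < 0 \<Longrightarrow> a \<le> c \<Longrightarrow> c \<le> 0 \<Longrightarrow> a + A / 2 - c < (B - c) / 2"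
  by argo

theorem lemma3p4:
  fixes f :: "real \<Rightarrow> ereal" and ds gs :: "nat \<Rightarrow> real" and N :: nat
  assumes "proper_concave f"
    and "\<exists>d \<in> fdom f. f d \<le> 0 \<and> (\<exists>g \<in> sgrad f d. g < 0)"
    and "(\<exists>x. f x = 0) \<or> argmax_set f \<noteq> {}"
    and "la_run f ds gs N"
  shows "\<forall>i. 3 \<le> i \<and> i \<le> N \<longrightarrow>
           bregman f (delta_star f) (ds i) < ereal (1/2) * bregman f (delta_star f) (ds (i - 2))"
proof (intro allI impI)
  note pc = assms(1) and run = assms(4)
  fix i assume i: "3 \<le> i \<and> i \<le> N"
  define t where "t = delta_star f"
  obtain c where ft: "f t = ereal c" "c \<le> 0" "\<forall>z>t. f z < ereal c" "\<forall>y. f y \<le> 0 \<longrightarrow> f y \<le> ereal c"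
    using dstar[OF assms(1-3)] unfolding t_def by blast
  define k where "k = i - 2"
  have k1: "1 \<le> k" and ik: "i = Suc (Suc k)" using i by (auto simp: k_def)
  define x0 where "x0 = ds k"
  define x1 where "x1 = ds (Suc k)"
  define x2 where "x2 = ds (Suc (Suc k))"
  define g0 where "g0 = gs k"
  define g1 where "g1 = gs (Suc k)"
  have kN: "Suc (Suc k) \<le> N" using i ik by simp
  obtain a0 where I0: "f x0 = ereal a0" "a0 \<le> 0" "g0 \<in> sgrad f x0" "a0 < 0 \<longrightarrow> g0 < 0" "t \<le> x0"
    using run_inv[OF pc ft run k1] kN unfolding x0_def g0_def by auto
  obtain a1 where I1: "f x1 = ereal a1" "a1 \<le> 0" "g1 \<in> sgrad f x1" "a1 < 0 \<longrightarrow> g1 < 0" "t \<le> x1"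
    using run_inv[OF pc ft run, of "Suc k"] kN unfolding x1_def g1_def by auto
  obtain a2 where I2: "f x2 = ereal a2" "a2 \<le> 0" "t \<le> x2"
    using run_inv[OF pc ft run, of "Suc (Suc k)"] kN unfolding x2_def by auto
  have st0: "la_step f x0 g0 x1 g1" using run k1 kN unfolding la_run_def x0_def x1_def g0_def g1_def by auto
  have st1: "la_step f x1 g1 x2 (gs (Suc (Suc k)))" using run k1 kN unfolding la_run_def x2_def x1_def g1_def by auto
  have "a0 \<noteq> 0" using st0 I0(1) unfolding la_step_def by (auto simp: zero_ereal_def)
  then have a0: "a0 < 0" using I0(2) by simp
  have "a1 \<noteq> 0" using st1 I1(1) unfolding la_step_def by (auto simp: zero_ereal_def)
  then have a1: "a1 < 0" using I1(2) by simp
  have g0: "g0 < 0" using I0(4) a0 by simp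
  have g1: "g1 < 0" using I1(4) a1 by simp
  define n0 where "n0 = x0 - a0/g0"
  define n1 where "n1 = x1 - a1/g1"
  have S0: "x1 \<le> n0" "t \<le> n0" "n0 < x0"
    using step[OF pc ft I0(1) a0 I0(5) I0(3) g0 st0] unfolding n0_def by auto
  have S1: "x2 \<le> n1" "t \<le> n1" "n1 < x1" "x2 = 2*n1 - x1 \<or> (x2 = n1 \<and> 2*n1 - x1 \<le> t)"
    using step[OF pc ft I1(1) a1 I1(5) I1(3) g1 st1] unfolding n1_def by auto
  have a2c: "a2 \<le> c"
  proof (cases "x2 = t")
    case True then show ?thesis using I2(1) ft(1) by simp
  next
    case False then have "t < x2" using I2(3) by simp
    then show ?thesis using ft(3) I2(1) by (metis ereal_less_eq(3) ereal_less(2) less_imp_le)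
  qed
  define L0 where "L0 = a0 + g0 * (t - x0) - c"
  have gn0: "g0 * n0 = g0 * x0 - a0" using g0 by (simp add: n0_def algebra_simps)
  have gn1: "g1 * n1 = g1 * x1 - a1" using g1 by (simp add: n1_def algebra_simps)
  have L0': "L0 = g0 * (t - n0) - c" using gn0 by (simp add: L0_def algebra_simps)
  have low: "ereal L0 \<le> bregman f t x0" unfolding L0_def using breg_lower[OF ft(1) I0(1) I0(3)] .
  have mono01: "g0 \<le> g1" using sgrad_mono[OF I0(1) I1(1) _ I1(3) I0(3)] S0 by simp
  have main: "bregman f t x2 < ereal (L0/2)"
  proof (cases "x2 = 2*n1 - x1")
    case True
    have B: "g * (t - x2) \<le> g1 * (t - x2) / 2" if g: "g \<in> sgrad f x2" for g
    proof -
      have "f x1 \<le> f x2 + ereal (g * (x1 - x2))" by (rule sgrad_le[OF g])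
      then have 1: "a1 \<le> a2 + g * (x1 - x2)" using I1(1) I2(1) by simp
      have e1: "x1 - x2 = 2 * (x1 - n1)" using True by simp
      have e2: "a1 = g1 * (x1 - n1)" using gn1 by (simp add: algebra_simps)
      have "0 \<le> (2 * g - g1) * (x1 - n1)" using 1 e1 e2 I2(2) by (simp add: algebra_simps)
      then have "0 \<le> 2 * g - g1" using S1(3) by (simp add: zero_le_mult_iff)
      then have "(g - g1/2) * (t - x2) \<le> 0" using I2(3) by (intro mult_nonneg_nonpos) auto
      moreover have "(g - g1/2) * (t - x2) = g * (t - x2) - g1 * (t - x2) / 2" by (simp add: algebra_simps)
      ultimately show ?thesis by linarith
    qed
    have B0: "0 \<le> g1 * (t - x2) / 2" using g1 I2(3) by (simp add: mult_nonpos_nonpos)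
    have up: "bregman f t x2 \<le> ereal (a2 + g1 * (t - x2) / 2 - c)"
      using breg_upper[OF ft(1) I2(1) I2(3) B B0] by simp
    have f1: "g1 * (n1 - x2) < 0" using True S1(3) g1 by (simp add: mult_neg_pos)
    have f2: "g1 * (t - x2) = g1 * (t - n1) + g1 * (n1 - x2)" by (simp add: algebra_simps)
    have r1: "a2 + g1 * (t - x2) / 2 - c < (g1 * (t - n1) - c) / 2" using aux1[OF f2 f1 a2c ft(2)] .
    have f3: "(g1 - g0) * (t - x1) \<le> 0" using mono01 I1(5) by (intro mult_nonneg_nonpos) auto
    have f4: "g0 * (n0 - x1) \<le> 0" using g0 S0(1) by (intro mult_nonpos_nonneg) auto
    have f5: "g1 * (t - n1) = a1 + g1 * (t - x1)" using gn1 by (simp add: algebra_simps)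
    have r2: "g1 * (t - n1) - c \<le> L0" unfolding L0' using f3 f4 f5 a1
      by (simp add: algebra_simps)
    show ?thesis using up r1 r2 by (simp add: order_le_less_trans)
  next
    case False
    then have x2n: "x2 = n1" "2*n1 - x1 \<le> t" using S1(4) by auto
    show ?thesis
    proof (cases "x2 = t")
      case True
      have "0 < L0"
      proof (cases "x1 = t")
        case True
        then have "c < 0" using I1(1) ft(1) a1 by simp
        moreover have "0 \<le> g0 * (t - n0)" using g0 S0(2) by (simp add: mult_nonpos_nonpos)
        ultimately show ?thesis unfolding L0' by simp
      next
        case False
        then have "t < n0" using I1(5) S0(1) by simp
        then have "0 < g0 * (t - n0)" using g0 by (simp add: mult_neg_neg)
        then show ?thesis unfolding L0' using ft(2) by simp
      qed
      then show ?thesis using True by (simp add: bregman_def)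
    next
      case False
      then have tx2: "t < x2" using I2(3) by simp
      have "f x2 < ereal c" using ft(3) tx2 by blast
      then have a2c': "a2 < c" using I2(1) by simp
      have B: "g * (t - x2) \<le> g0 * (t - x2)" if g: "g \<in> sgrad f x2" for g
      proof -
        have "g0 \<le> g" using sgrad_mono[OF I0(1) I2(1) _ g I0(3)] S0 S1 by simp
        then have "(g - g0) * (t - x2) \<le> 0" using tx2 by (intro mult_nonneg_nonpos) auto
        then show ?thesis by (simp add: algebra_simps)
      qed
      have B0: "0 \<le> g0 * (t - x2)" using g0 tx2 by (simp add: mult_nonpos_nonpos)
      have up: "bregman f t x2 \<le> ereal (a2 + g0 * (t - x2) - c)"
        using breg_upper[OF ft(1) I2(1) I2(3) B B0] by simp
      have "2 * (x2 - t) \<le> n0 - t" using x2n S0(1) by simp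
      then have "(-g0) * (2 * (x2 - t)) \<le> (-g0) * (n0 - t)" using g0 by (intro mult_left_mono) auto
      then have "2 * (g0 * (t - x2)) \<le> g0 * (t - n0)" by (simp add: algebra_simps)
      then have "a2 + g0 * (t - x2) - c < L0/2" unfolding L0' using a2c' ft(2) by simp
      then show ?thesis using up by (simp add: order_le_less_trans)
    qed
  qed
  have "ereal (1/2) * ereal L0 \<le> ereal (1/2) * bregman f t x0"
    using low by (intro ereal_mult_left_mono) auto
  then have "ereal (L0/2) \<le> ereal (1/2) * bregman f t x0" by simp
  then have "bregman f t x2 < ereal (1/2) * bregman f t x0" by (rule order_less_le_trans[OF main])
  then show "bregman f (delta_star f) (ds i) < ereal (1/2) * bregman f (delta_star f) (ds (i - 2))"
    unfolding t_def x2_def x0_def ik by simp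
qed


end
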